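(* Consider the system $S'=\Lambda-\beta\frac{SB}{B+D}-(\mu+\psi)S+wR$, $V'=\psi S-\sigma\beta\frac{VB}{B+D}-\mu V$, $I'=\beta\frac{SB}{B+D}+\sigma\beta\frac{VB}{B+D}-(\mu+\gamma)I$, $R'=\gamma I-(\mu+w)R$, $B'=\eta I-\delta B$. Consider a bifurcation point in parameter space (as described in the context) at which ${\cal R}_0=1$, $a=0$, $b>0$ and $e\neq 0$. Then $c\le 0$.
   Context: All parameters $\Lambda,\beta,D,\mu,\psi,w,\sigma,\gamma,\eta,\delta$ are positive constants. The unique disease-free equilibrium (DFE) is $(S,V,I,R,B)=\left(\frac{\Lambda}{\mu+\psi},\frac{\Lambda\psi}{\mu(\mu+\psi)},0,0,0\right)$, the infected variables are $I$ and $B$, and ${\cal R}_0=\frac{\eta\beta(S_0+\sigma V_0)}{D\delta(\mu+\gamma)}$ where $S_0,V_0$ are the DFE values. A bifurcation point is a parameter value at which ${\cal R}_0=1$, zero is a simple eigenvalue of the Jacobian at the DFE and all other eigenvalues have negative real parts. Two of the model parameters are chosen as $\alpha_1,\alpha_2$ (shifted so that the bifurcation point corresponds to $\alpha_1=\alpha_2=0$), with the DFE independent of $\alpha_1$. Adjoining $\dot\alpha_1=\dot\alpha_2=0$ and restricting to the centre manifold of the DFE at the bifurcation point gives a scalar equation $\dot u=h(u,\alpha_1,\alpha_2)$, with $u$ a coordinate vanishing at the DFE and increasing along the null eigenvector whose infected components are non-negative; $h(0,\alpha_1,\alpha_2)=0$. Set $a=\tfrac12h_{uu}$, $b=h_{u\alpha_1}$,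 $c=\tfrac13h_{uuu}$, $d=h_{uu\alpha_2}$, all at $(0,0,0)$, and $e=\frac{-bd+h_{uu\alpha_1}h_{u\alpha_2}}{2bc}$ evaluated at $(0,0,0)$. *)

theory Defs
  imports "HOL-Analysis.Analysis"
begin

definition Lam :: "real^10 \<Rightarrow> real" where "Lam p = p$0"
definition bet :: "real^10 \<Rightarrow> real" where "bet p = p$1"
definition DD  :: "real^10 \<Rightarrow> real" where "DD p = p$2"
definition mu  :: "real^10 \<Rightarrow> real" where "mu p = p$3"
definition psi :: "real^10 \<Rightarrow> real" where "psi p = p$4"
definition ww  :: "real^10 \<Rightarrow> real" where "ww p = p$5"
definition sig :: "real^10 \<Rightarrow> real" where "sig p = p$6"
definition gam :: "real^10 \<Rightarrow> real" where "gam p = p$7"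
definition eta :: "real^10 \<Rightarrow> real" where "eta p = p$8"
definition del :: "real^10 \<Rightarrow> real" where "del p = p$9"

definition F :: "real^10 \<Rightarrow> real^5 \<Rightarrow> real^5" where
  "F p x = (\<chi> k.
     (let S = x$0; V = x$1; I = x$2; R = x$3; B = x$4 in
      if k = 0 then Lam p - bet p * S * B / (B + DD p) - (mu p + psi p) * S + ww p * R
      else if k = 1 then psi p * S - sig p * bet p * V * B / (B + DD p) - mu p * V
      else if k = 2 then bet p * S * B / (B + DD p) + sig p * bet p * V * B / (B + DD p)
                          - (mu p + gam p) * I
      else if k = 3 then gam p * I - (mu p + ww p) * R
      else eta p * I - del p * B))"

definition dfe :: "real^10 \<Rightarrow> real^5" where
  "dfe p = (\<chi> k. if k = 0 then Lam p / (mu p + psi p)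
                 else if k = 1 then Lam p * psi p / (mu p * (mu p + psi p))
                 else 0)"

definition R0 :: "real^10 \<Rightarrow> real" where
  "R0 p = eta p * bet p * (dfe p $ 0 + sig p * dfe p $ 1) / (DD p * del p * (mu p + gam p))"

fun pd :: "'n::finite list \<Rightarrow> (real^'n \<Rightarrow> real) \<Rightarrow> real^'n \<Rightarrow> real" where
  "pd [] f = f"
| "pd (i # is) f = (\<lambda>x. deriv (\<lambda>t. pd is f (x + t *\<^sub>R axis i 1)) 0)"

definition pdv :: "'n::finite list \<Rightarrow> (real^'n \<Rightarrow> real^'m) \<Rightarrow> real^'n \<Rightarrow> real^'m" where
  "pdv is f = (\<lambda>x. \<chi> k. pd is (\<lambda>y. f y $ k) x)"

definition Ck_on :: "nat \<Rightarrow> (real^'n::finite) set \<Rightarrow> (real^'n \<Rightarrow> real) \<Rightarrow> bool" where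
  "Ck_on k U f \<longleftrightarrow>
     (\<forall>is. length is \<le> k \<longrightarrow> continuous_on U (pd is f)) \<and>
     (\<forall>is i x. length is < k \<longrightarrow> x \<in> U \<longrightarrow>
        (\<lambda>t. pd is f (x + t *\<^sub>R axis i 1)) differentiable (at 0))"

definition Ckv_on :: "nat \<Rightarrow> (real^'n::finite) set \<Rightarrow> (real^'n \<Rightarrow> real^'m::finite) \<Rightarrow> bool" where
  "Ckv_on k U f \<longleftrightarrow> (\<forall>j. Ck_on k U (\<lambda>y. f y $ j))"

definition jac :: "real^10 \<Rightarrow> real^5^5" where
  "jac p = (\<chi> r s. pd [s] (\<lambda>x. F p x $ r) (dfe p))"

definition charpoly :: "real^10 \<Rightarrow> complex \<Rightarrow> complex" where
  "charpoly p z = det (\<chi> r s. (if r = s then z else 0) - complex_of_real (jac p $ r $ s))"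

definition bif_point :: "real^10 \<Rightarrow> bool" where
  "bif_point p \<longleftrightarrow> (\<forall>i. p $ i > 0) \<and> R0 p = 1 \<and>
     charpoly p 0 = 0 \<and> deriv (charpoly p) 0 \<noteq> 0 \<and>
     (\<forall>z. charpoly p z = 0 \<longrightarrow> z \<noteq> 0 \<longrightarrow> Re z < 0)"

end

theory Submission imports Defs begin

lemma exhaust_5:
  fixes x :: 5
  shows "x = 0 \<or> x = 1 \<or> x = 2 \<or> x = 3 \<or> x = 4"
proof (induct x)
  case (of_int z)
  then have "z = 0 \<or> z = 1 \<or> z = 2 \<or> z = 3 \<or> z = 4" by fastforce
  then show ?case by auto
qed

lemma UNIV_5: "(UNIV::5 set) = {0,1,2,3,4}"
  using exhaust_5 by auto

lemma sum_5: "sum f (UNIV::5 set) = f 0 + f 1 + f 2 + f 3 + f 4"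
  unfolding UNIV_5 by (simp add: ac_simps)

lemma F_comp:
  "F p x $ 0 = Lam p - bet p * x$0 * x$4 / (x$4 + DD p) - (mu p + psi p) * x$0 + ww p * x$3"
  "F p x $ 1 = psi p * x$0 - sig p * bet p * x$1 * x$4/(x$4 + DD p) - mu p * x$1"
  "F p x $ 2 = bet p * x$0 * x$4/(x$4+DD p) + sig p * bet p * x$1 * x$4/(x$4+DD p) - (mu p + gam p) * x$2"
  "F p x $ 3 = gam p * x$2 - (mu p + ww p) * x$3"
  "F p x $ 4 = eta p * x$2 - del p * x$4"
  by (simp_all add: F_def Let_def)

lemma dfe_comp:
  "dfe p $ 0 = Lam p / (mu p + psi p)"
  "dfe p $ 1 = Lam p * psi p / (mu p * (mu p + psi p))"
  "dfe p $ 2 = 0" "dfe p $ 3 = 0" "dfe p $ 4 = 0"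
  by (simp_all add: dfe_def)

lemma jac_row0:
  assumes "DD p \<noteq> 0"
  shows "(jac p *v y) $ 0 = - bet p * (dfe p $ 0) * y$4 / DD p - (mu p + psi p) * y$0 + ww p * y$3"
proof -
  have d: "deriv (\<lambda>t. F p (dfe p + t *\<^sub>R z) $ 0) 0 = - bet p * (dfe p $ 0) * z$4 / DD p - (mu p + psi p) * z$0 + ww p * z$3" for z
  proof (rule DERIV_imp_deriv)
    show "((\<lambda>t. F p (dfe p + t *\<^sub>R z) $ 0) has_real_derivative (- bet p * (dfe p $ 0) * z$4 / DD p - (mu p + psi p) * z$0 + ww p * z$3)) (at 0)"
      unfolding F_comp using assms
      apply (simp add: dfe_comp(3,4,5))
      apply (rule derivative_eq_intros refl | simp add: ac_simps)+
      done
  qed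
  show ?thesis
    by (simp add: matrix_vector_mult_def jac_def sum_5 d axis_def algebra_simps)
qed

lemma jac_rows:
  assumes "DD p \<noteq> 0"
  shows "(jac p *v y) $ 1 = psi p * y$0 - sig p * bet p * (dfe p $ 1) * y$4 / DD p - mu p * y$1"
    "(jac p *v y) $ 2 = bet p * (dfe p $ 0) * y$4 / DD p + sig p * bet p * (dfe p $ 1) * y$4 / DD p - (mu p + gam p) * y$2"
    "(jac p *v y) $ 3 = gam p * y$2 - (mu p + ww p) * y$3"
    "(jac p *v y) $ 4 = eta p * y$2 - del p * y$4"
proof -
  have d1: "deriv (\<lambda>t. F p (dfe p + t *\<^sub>R z) $ 1) 0 = psi p * z$0 - sig p * bet p * (dfe p $ 1) * z$4 / DD p - mu p * z$1" for z
    apply (rule DERIV_imp_deriv)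
    unfolding F_comp using assms
      apply (simp add: dfe_comp(3,4,5))
      apply (rule derivative_eq_intros refl | simp add: ac_simps)+
      done
  have d2: "deriv (\<lambda>t. F p (dfe p + t *\<^sub>R z) $ 2) 0 = bet p * (dfe p $ 0) * z$4 / DD p + sig p * bet p * (dfe p $ 1) * z$4 / DD p - (mu p + gam p) * z$2" for z
    apply (rule DERIV_imp_deriv)
    unfolding F_comp using assms
      apply (simp add: dfe_comp(3,4,5))
      apply (rule derivative_eq_intros refl | simp add: ac_simps)+
      done
  have d3: "deriv (\<lambda>t. F p (dfe p + t *\<^sub>R z) $ 3) 0 = gam p * z$2 - (mu p + ww p) * z$3" for z
    apply (rule DERIV_imp_deriv)
    unfolding F_comp using assms
      apply (simp add: dfe_comp(3,4,5))
      apply (rule derivative_eq_intros refl | simp add: ac_simps)+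
      done
  have d4: "deriv (\<lambda>t. F p (dfe p + t *\<^sub>R z) $ 4) 0 = eta p * z$2 - del p * z$4" for z
    apply (rule DERIV_imp_deriv)
    unfolding F_comp using assms
      apply (simp add: dfe_comp(3,4,5))
      apply (rule derivative_eq_intros refl | simp add: ac_simps)+
      done
  show "(jac p *v y) $ 1 = psi p * y$0 - sig p * bet p * (dfe p $ 1) * y$4 / DD p - mu p * y$1"
    by (simp add: matrix_vector_mult_def jac_def sum_5 d1 axis_def algebra_simps)
  show "(jac p *v y) $ 2 = bet p * (dfe p $ 0) * y$4 / DD p + sig p * bet p * (dfe p $ 1) * y$4 / DD p - (mu p + gam p) * y$2"
    by (simp add: matrix_vector_mult_def jac_def sum_5 d2 axis_def algebra_simps)
  show "(jac p *v y) $ 3 = gam p * y$2 - (mu p + ww p) * y$3"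
    by (simp add: matrix_vector_mult_def jac_def sum_5 d3 axis_def algebra_simps)
  show "(jac p *v y) $ 4 = eta p * y$2 - del p * y$4"
    by (simp add: matrix_vector_mult_def jac_def sum_5 d4 axis_def algebra_simps)
qed

lemma line_deriv:
  fixes f :: "real^3 \<Rightarrow> real"
  assumes "Ck_on 3 U f" "u *\<^sub>R axis 0 1 \<in> U" "length is < 3"
  shows "((\<lambda>u. pd is f (u *\<^sub>R axis 0 1)) has_real_derivative pd (0 # is) f (u *\<^sub>R axis 0 1)) (at u)"
proof -
  let ?x = "u *\<^sub>R (axis 0 1 :: real^3)"
  have "(\<lambda>t. pd is f (?x + t *\<^sub>R axis 0 1)) differentiable (at 0)"
    using assms unfolding Ck_on_def by blast
  then have "((\<lambda>t. pd is f (?x + t *\<^sub>R axis 0 1)) has_real_derivative pd (0 # is) f ?x) (at 0)"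
    using DERIV_deriv_iff_real_differentiable by simp
  moreover have "(\<lambda>t. pd is f (?x + t *\<^sub>R axis 0 1)) = (\<lambda>t. pd is f ((t + u) *\<^sub>R axis 0 1))"
    by (simp add: scaleR_add_left add.commute)
  ultimately have "((\<lambda>t. pd is f ((t + u) *\<^sub>R axis 0 1)) has_real_derivative pd (0 # is) f ?x) (at 0)"
    by simp
  then show ?thesis using DERIV_shift[of "\<lambda>u. pd is f (u *\<^sub>R axis 0 1)" _ 0 u] by simp
qed

lemma lim_step:
  fixes f f' :: "real \<Rightarrow> real"
  assumes f0: "f 0 = 0" and ev: "\<forall>\<^sub>F u in nhds 0. (f has_real_derivative f' u) (at u)"
    and lim: "((\<lambda>u. f' u / u ^ n) \<longlongrightarrow> L) (at 0)"
  shows "((\<lambda>u. f u / u ^ Suc n) \<longlongrightarrow> L / real (Suc n)) (at 0)"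
proof (rule lhopital[where f' = f' and g' = "\<lambda>u. real (Suc n) * u ^ n"])
  have "(f has_real_derivative f' 0) (at 0)" using ev eventually_nhds_x_imp_x by blast
  then have "isCont f 0" by (rule DERIV_isCont)
  then show "(f \<longlongrightarrow> 0) (at 0)" using f0 by (simp add: isCont_def)
  show "((\<lambda>u. u ^ Suc n) \<longlongrightarrow> 0) (at (0::real))"
    by (intro tendsto_eq_intros) auto
  show "\<forall>\<^sub>F x in at 0. x ^ Suc n \<noteq> (0::real)"
    by (auto simp: eventually_at_filter)
  have nz: "\<forall>\<^sub>F x in at (0::real). x \<noteq> 0" by (simp add: eventually_at_filter)
  show "\<forall>\<^sub>F x in at 0. real (Suc n) * x ^ n \<noteq> (0::real)"
    using nz by (rule eventually_mono) simp
  show "\<forall>\<^sub>F x in at 0. (f has_real_derivative f' x) (at x)"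
    using ev by (auto simp: eventually_at_filter elim: eventually_mono)
  show "\<forall>\<^sub>F x in at 0. ((\<lambda>u. u ^ Suc n) has_real_derivative real (Suc n) * x ^ n) (at x)"
  proof (intro always_eventually allI)
    fix x :: real
    show "((\<lambda>u. u ^ Suc n) has_real_derivative real (Suc n) * x ^ n) (at x)"
      using DERIV_pow[of "Suc n" x] by simp
  qed
  have "((\<lambda>u. f' u / u ^ n / real (Suc n)) \<longlongrightarrow> L / real (Suc n)) (at 0)"
    by (intro tendsto_intros lim) simp
  then show "((\<lambda>x. f' x / (real (Suc n) * x ^ n)) \<longlongrightarrow> L / real (Suc n)) (at 0)"
    by (simp add: field_simps)
qed

lemma quot_lim:
  fixes g :: "real \<Rightarrow> real"
  assumes "(g has_real_derivative D) (at 0)" "g 0 = 0"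
  shows "((\<lambda>u. g u / u) \<longlongrightarrow> D) (at 0)"
  using assms by (simp add: has_field_derivative_iff)

lemma div3: "(x*A + y*B + z*C)/(u::real) = x*(A/u) + y*(B/u) + z*(C/u)"
  by (simp add: add_divide_distrib)

lemma idS1:
  fixes u D L m b w S0 d0 d3 d4 :: real
  assumes "u \<noteq> 0" "u*d4 + D \<noteq> 0" "L = m*S0"
  shows "(L - b*(S0 + u*d0)*(u*d4)/(u*d4 + D) - m*(S0 + u*d0) + w*(u*d3))/u
    = - b*(S0 + u*d0)*d4/(u*d4+D) - m*d0 + w*d3"
proof -
  define E where "E = u*d4 + D"
  have "E \<noteq> 0" using assms E_def by simp
  then show ?thesis using assms unfolding E_def[symmetric] by (simp add: field_simps)
qed

lemma idV1:
  fixes u D m b ps g S0 V0 d0 d1 d4 :: real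
  assumes "u \<noteq> 0" "u*d4 + D \<noteq> 0" "ps*S0 = m*V0"
  shows "(ps*(S0 + u*d0) - g*b*(V0 + u*d1)*(u*d4)/(u*d4+D) - m*(V0 + u*d1))/u
    = ps*d0 - g*b*(V0 + u*d1)*d4/(u*d4+D) - m*d1"
proof -
  define E where "E = u*d4 + D"
  have "E \<noteq> 0" using assms E_def by simp
  then show ?thesis using assms unfolding E_def[symmetric] by (simp add: field_simps)
qed

lemma idI1:
  fixes u D k b g p0 p1 d2 d4 :: real
  assumes "u \<noteq> 0" "u*d4 + D \<noteq> 0"
  shows "(b*p0*(u*d4)/(u*d4+D) + g*b*p1*(u*d4)/(u*d4+D) - k*(u*d2))/u
    = b*p0*d4/(u*d4+D) + g*b*p1*d4/(u*d4+D) - k*d2"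
proof -
  define E where "E = u*d4 + D"
  have "E \<noteq> 0" using assms E_def by simp
  then show ?thesis using assms unfolding E_def[symmetric] by (simp add: field_simps)
qed

lemma idL1:
  fixes u c k d2 d3 :: real
  assumes "u \<noteq> 0"
  shows "(c*(u*d2) - k*(u*d3))/u = c*d2 - k*d3"
  using assms by (simp add: field_simps)

lemma brk:
  fixes u D X0 dX d4 v4 q4 :: real
  assumes "u \<noteq> 0" "D \<noteq> 0" "u*d4 + D \<noteq> 0" "d4 = v4 + u*q4"
  shows "((X0 + u*dX)*d4/(u*d4+D) - X0* v4/D)/u = (D*X0*q4 + D*dX*d4 - X0* v4*d4)/(D*(u*d4+D))"
proof -
  define E where "E = u*d4 + D"
  have E: "E \<noteq> 0" using assms E_def by simp
  have "(X0 + u*dX)*d4/E - X0* v4/D = (D*(X0 + u*dX)*d4 - X0* v4*E)/(D*E)"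
    using assms E by (simp add: field_simps)
  also have "D*(X0 + u*dX)*d4 - X0* v4*E = u*(D*X0*q4 + D*dX*d4 - X0* v4*d4)"
    using assms(4) unfolding E_def by (simp add: algebra_simps)
  finally show ?thesis using assms E unfolding E_def[symmetric] by simp
qed

lemma idS2:
  fixes u D m b w S0 d0 d3 d4 v0 v3 v4 q0 q3 q4 :: real
  assumes "u \<noteq> 0" "D \<noteq> 0" "u*d4 + D \<noteq> 0" "d4 = v4 + u*q4"
    "d0 = v0 + u*q0" "d3 = v3 + u*q3" "- b*S0* v4/D - m* v0 + w* v3 = 0"
  shows "(- b*(S0 + u*d0)*d4/(u*d4+D) - m*d0 + w*d3)/u
     = - b*((D*S0*q4 + D*d0*d4 - S0* v4*d4)/(D*(u*d4+D))) - m*q0 + w*q3"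
proof -
  have "(- b*(S0 + u*d0)*d4/(u*d4+D) - m*d0 + w*d3) = (- b)*((S0 + u*d0)*d4/(u*d4+D) - S0* v4/D) + (- m)*(d0 - v0) + w*(d3 - v3)"
    using assms(7) by (simp add: algebra_simps)
  then have "(- b*(S0 + u*d0)*d4/(u*d4+D) - m*d0 + w*d3)/u = (- b)*(((S0 + u*d0)*d4/(u*d4+D) - S0* v4/D)/u) + (- m)*((d0 - v0)/u) + w*((d3 - v3)/u)"
    by (simp only: div3)
  then show ?thesis using brk[OF assms(1-4)] assms(1,5,6) by simp
qed

lemma idV2:
  fixes u D m b ps g V0 d0 d1 d4 v0 v1 v4 q0 q1 q4 :: real
  assumes "u \<noteq> 0" "D \<noteq> 0" "u*d4 + D \<noteq> 0" "d4 = v4 + u*q4"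
    "d0 = v0 + u*q0" "d1 = v1 + u*q1" "ps* v0 - g*b*V0* v4/D - m* v1 = 0"
  shows "(ps*d0 - g*b*(V0 + u*d1)*d4/(u*d4+D) - m*d1)/u
     = ps*q0 - g*b*((D*V0*q4 + D*d1*d4 - V0* v4*d4)/(D*(u*d4+D))) - m*q1"
proof -
  have "(ps*d0 - g*b*(V0 + u*d1)*d4/(u*d4+D) - m*d1) = ps*(d0 - v0) + (- g*b)*((V0 + u*d1)*d4/(u*d4+D) - V0* v4/D) + (- m)*(d1 - v1)"
    using assms(7) by (simp add: algebra_simps) (simp add: add_divide_distrib[symmetric])
  then have "(ps*d0 - g*b*(V0 + u*d1)*d4/(u*d4+D) - m*d1)/u = ps*((d0 - v0)/u) + (- g*b)*(((V0 + u*d1)*d4/(u*d4+D) - V0* v4/D)/u) + (- m)*((d1 - v1)/u)"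
    by (simp only: div3)
  then show ?thesis using brk[OF assms(1-4)] assms(1,5,6) by simp
qed

lemma idI2:
  fixes u D k b g S0 V0 d0 d1 d2 d4 v2 v4 q2 q4 :: real
  assumes "u \<noteq> 0" "D \<noteq> 0" "u*d4 + D \<noteq> 0" "d4 = v4 + u*q4"
    "d2 = v2 + u*q2" "b*S0* v4/D + g*b*V0* v4/D - k* v2 = 0"
  shows "(b*(S0 + u*d0)*d4/(u*d4+D) + g*b*(V0 + u*d1)*d4/(u*d4+D) - k*d2)/u
     = b*((D*S0*q4 + D*d0*d4 - S0* v4*d4)/(D*(u*d4+D))) + g*b*((D*V0*q4 + D*d1*d4 - V0* v4*d4)/(D*(u*d4+D))) - k*q2"
proof -
  have "(b*(S0 + u*d0)*d4/(u*d4+D) + g*b*(V0 + u*d1)*d4/(u*d4+D) - k*d2) = b*((S0 + u*d0)*d4/(u*d4+D) - S0* v4/D) + (g*b)*((V0 + u*d1)*d4/(u*d4+D) - V0* v4/D) + (- k)*(d2 - v2)"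
    using assms(6) by (simp add: algebra_simps)
  then have "(b*(S0 + u*d0)*d4/(u*d4+D) + g*b*(V0 + u*d1)*d4/(u*d4+D) - k*d2)/u = b*(((S0 + u*d0)*d4/(u*d4+D) - S0* v4/D)/u) + (g*b)*(((V0 + u*d1)*d4/(u*d4+D) - V0* v4/D)/u) + (- k)*((d2 - v2)/u)"
    by (simp only: div3)
  then show ?thesis using brk[OF assms(1-4), of S0 d0] brk[OF assms(1-4), of V0 d1] assms(1,5) by simp
qed

lemma idL2:
  fixes u c k d2 d3 v2 v3 q2 q3 :: real
  assumes "u \<noteq> 0" "d2 = v2 + u*q2" "d3 = v3 + u*q3" "c* v2 - k* v3 = 0"
  shows "(c*d2 - k*d3)/u = c*q2 - k*q3"
proof -
  have "c*d2 - k*d3 = u*(c*q2 - k*q3)" using assms(2-4) by (simp add: algebra_simps)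
  then show ?thesis using assms(1) by simp
qed

lemma idZ:
  fixes u D k b g et dl S0 V0 d0 d1 d2 d4 v0 v1 v4 q0 q1 q4 :: real
  assumes "u \<noteq> 0" "D \<noteq> 0" "u*d4 + D \<noteq> 0" "d4 = v4 + u*q4"
    "d0 = v0 + u*q0" "d1 = v1 + u*q1"
    "et*b*(S0+g*V0) = D*dl*k" "D*(v0 + g* v1) = (S0+g*V0)* v4"
  shows "(et*(b*(S0 + u*d0)*(u*d4)/(u*d4+D) + g*b*(V0 + u*d1)*(u*d4)/(u*d4+D) - k*(u*d2)) + k*(et*(u*d2) - dl*(u*d4)))/u^3
     = et*b*d4*(D*(q0+g*q1) - (S0+g*V0)*q4)/(D*(u*d4+D))"
proof -
  define E where "E = u*d4 + D"
  have E: "E \<noteq> 0" using assms E_def by simp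
  have kdl: "k*dl = et*b*(S0+g*V0)/D" using assms(2,7) by (simp add: field_simps)
  have "et*(b*(S0 + u*d0)*(u*d4)/E + g*b*(V0 + u*d1)*(u*d4)/E - k*(u*d2)) + k*(et*(u*d2) - dl*(u*d4))
      = et*b*(u*d4)*(((S0 + u*d0) + g*(V0 + u*d1))/E) - (k*dl)*(u*d4)"
    by (simp add: algebra_simps add_divide_distrib)
  also have "\<dots> = et*b*(u*d4)*(((S0 + u*d0) + g*(V0 + u*d1))/E - (S0+g*V0)/D)"
    unfolding kdl by (simp add: algebra_simps)
  also have "((S0 + u*d0) + g*(V0 + u*d1))/E - (S0+g*V0)/D = (D*((S0 + u*d0) + g*(V0 + u*d1)) - (S0+g*V0)*E)/(D*E)"
    using assms(2) E by (simp add: field_simps)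
  also have "D*((S0 + u*d0) + g*(V0 + u*d1)) - (S0+g*V0)*E = u*(D*(d0 + g*d1) - (S0+g*V0)*d4)"
    unfolding E_def by (simp add: algebra_simps)
  also have "D*(d0 + g*d1) - (S0+g*V0)*d4 = u*(D*(q0+g*q1) - (S0+g*V0)*q4)"
    using assms(4,5,6,8) by (simp add: algebra_simps)
  finally have "et*(b*(S0 + u*d0)*(u*d4)/E + g*b*(V0 + u*d1)*(u*d4)/E - k*(u*d2)) + k*(et*(u*d2) - dl*(u*d4))
     = u^3 * (et*b*d4*(D*(q0+g*q1) - (S0+g*V0)*q4)/(D*E))"
    by (simp add: power3_eq_cube)
  then show ?thesis using assms(1) unfolding E_def[symmetric] by simp
qed

lemma alg1:
  fixes pb pD pm pps pw pg pga pet pdl S0 V0 v0 v1 v2 v3 v4 :: real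
  assumes pos: "pb > 0" "pD > 0" "pm > 0" "pps > 0" "pw > 0" "pg > 0" "pga > 0" "pet > 0" "pdl > 0"
    and r0: "- pb * S0 * v4 / pD - (pm + pps) * v0 + pw * v3 = 0"
    and r1: "pps * v0 - pg * pb * V0 * v4 / pD - pm * v1 = 0"
    and r3: "pga * v2 - (pm + pw) * v3 = 0"
    and r4: "pet * v2 - pdl * v4 = 0"
    and nz: "v0 \<noteq> 0 \<or> v1 \<noteq> 0 \<or> v2 \<noteq> 0 \<or> v3 \<noteq> 0 \<or> v4 \<noteq> 0"
    and v4: "v4 \<ge> 0"
  shows "v4 > 0" "v2 > 0" "v3 > 0"
proof -
  show "v4 > 0"
  proof (rule ccontr)
    assume "\<not> v4 > 0"
    then have z4: "v4 = 0" using v4 by simp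
    then have z2: "v2 = 0" using r4 pos by simp
    then have z3: "v3 = 0" using r3 pos by (simp add: add_pos_pos)
    then have z0: "v0 = 0" using r0 z4 pos by (simp add: add_pos_pos)
    then have z1: "v1 = 0" using r1 z4 pos by simp
    show False using nz z0 z1 z2 z3 z4 by simp
  qed
  then have "pet * v2 > 0" using r4 pos by simp
  then show "v2 > 0" using pos by (simp add: zero_less_mult_iff)
  then have "pga * v2 > 0" using pos by simp
  moreover have "(pm + pw) * v3 = pga * v2" using r3 by simp
  ultimately have "(pm + pw) * v3 > 0" by simp
  then show "v3 > 0" using pos by (simp add: zero_less_mult_iff)
qed

lemma alg_a:
  fixes pb pD pm pga pet pdl pg S0 V0 v0 v1 v4 q0 q1 q2 q4 :: real
  assumes pos: "pb > 0" "pD > 0" "pet > 0" and v4: "v4 > 0"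
    and R0eq: "pet*pb*(S0+pg*V0) = pD*pdl*(pm+pga)"
    and s2: "pb*((pD*S0*q4 + pD* v0* v4 - S0* v4* v4)/(pD*pD)) + pg*pb*((pD*V0*q4 + pD* v1* v4 - V0* v4* v4)/(pD*pD)) - (pm+pga)*q2 = 0"
    and s4: "pet*q2 - pdl*q4 = 0"
  shows "pD*(v0 + pg* v1) = (S0+pg*V0)* v4"
proof -
  have q2: "q2 = pdl*q4/pet" using s4 pos by (simp add: field_simps)
  have "(pm+pga)*q2 = pb*(S0+pg*V0)*q4/pD"
  proof -
    have "(pm+pga)*q2 = (pD*pdl*(pm+pga))*q4/(pet*pD)" unfolding q2 using pos by (simp add: field_simps)
    also have "\<dots> = pb*(S0+pg*V0)*q4/pD" unfolding R0eq[symmetric] using pos by (simp add: field_simps)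
    finally show ?thesis .
  qed
  then have "pb*((pD*S0*q4 + pD* v0* v4 - S0* v4* v4)/(pD*pD)) + pg*pb*((pD*V0*q4 + pD* v1* v4 - V0* v4* v4)/(pD*pD)) - pb*(S0+pg*V0)*q4/pD = 0"
    using s2 by simp
  moreover have B: "pb*((pD*S0*q4 + pD* v0* v4 - S0* v4* v4)/(pD*pD)) + pg*pb*((pD*V0*q4 + pD* v1* v4 - V0* v4* v4)/(pD*pD)) - pb*(S0+pg*V0)*q4/pD
     = pb* v4*(pD*(v0 + pg* v1) - (S0+pg*V0)* v4)/(pD*pD)"
    using pos by (simp add: field_simps)
  ultimately have "pb* v4*(pD*(v0 + pg* v1) - (S0+pg*V0)* v4)/(pD*pD) = 0" by (simp only: B)
  then show ?thesis using pos v4 by simp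
qed

lemma alg2:
  fixes pb pD pm pps pw pg pga pet pdl S0 V0 v0 v1 v2 v3 v4 q0 q1 q2 q3 q4 H3 :: real
  assumes pos: "pb > 0" "pD > 0" "pm > 0" "pps > 0" "pw > 0" "pg > 0" "pga > 0" "pet > 0" "pdl > 0"
    and S0: "S0 > 0" and V0: "V0 > 0" and psS0: "pps*S0 = pm*V0"
    and r0: "- pb * S0 * v4 / pD - (pm + pps) * v0 + pw * v3 = 0"
    and r1: "pps * v0 - pg * pb * V0 * v4 / pD - pm * v1 = 0"
    and r2: "pb * S0 * v4 / pD + pg * pb * V0 * v4 / pD - (pm + pga) * v2 = 0"
    and r3: "pga * v2 - (pm + pw) * v3 = 0"
    and r4: "pet * v2 - pdl * v4 = 0"
    and v4: "v4 > 0" and v2: "v2 > 0" and v3: "v3 > 0"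
    and aeq: "pD*(v0 + pg* v1) = (S0+pg*V0)* v4"
    and s0: "- pb*((pD*S0*q4 + pD* v0* v4 - S0* v4* v4)/(pD*pD)) - (pm+pps)*q0 + pw*q3 = 0"
    and s1: "pps*q0 - pg*pb*((pD*V0*q4 + pD* v1* v4 - V0* v4* v4)/(pD*pD)) - pm*q1 = 0"
    and s3: "pga*q2 - (pm+pw)*q3 = 0"
    and s4: "pet*q2 - pdl*q4 = 0"
    and Z: "H3/2/3*(pet* v2 + (pm+pga)* v4) = pet*pb* v4*(pD*(q0+pg*q1) - (S0+pg*V0)*q4)/(pD*pD)"
  shows "H3 \<le> 0"
proof -
  define X where "X = v0 - S0* v4/pD"
  define Y where "Y = v1 - V0* v4/pD"
  have XY: "X + pg*Y = 0"
  proof -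
    have "X + pg*Y = (pD*(v0 + pg* v1) - (S0+pg*V0)* v4)/pD"
      unfolding X_def Y_def using pos by (simp add: field_simps)
    then show ?thesis using aeq by simp
  qed
  have mY: "pm*Y = pps*X - pg*pb*V0* v4/pD"
  proof -
    have "pm*Y = pm* v1 - pm*V0* v4/pD" by (simp add: Y_def algebra_simps)
    also have "pm*V0* v4/pD = pps*S0* v4/pD" using psS0 by simp
    also have "pm* v1 = pps * v0 - pg * pb * V0 * v4 / pD" using r1 by simp
    finally show ?thesis by (simp add: X_def algebra_simps)
  qed
  have Xeq: "X*(pps*pg + pm) = pg*pg*pb*V0* v4/pD"
  proof -
    have "pg*Y = -X" using XY by simp
    then have "pm*(pg*Y) = -pm*X" by simp
    moreover have "pm*(pg*Y) = pg*(pm*Y)" by simp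
    ultimately have "-pm*X = pg*(pps*X - pg*pb*V0* v4/pD)" using mY by simp
    then show ?thesis by (simp add: algebra_simps)
  qed
  have "pg*pg*pb*V0* v4/pD > 0" using pos V0 v4 by simp
  then have "X*(pps*pg + pm) > 0" using Xeq by simp
  moreover have "pps*pg + pm > 0" using pos by (simp add: add_pos_pos)
  ultimately have Xpos: "X > 0" by (simp add: zero_less_mult_iff)
  have sum: "pm*(v0+v1+v2+v3) = 0"
  proof -
    have "(- pb * S0 * v4 / pD - (pm + pps) * v0 + pw * v3) + (pps * v0 - pg * pb * V0 * v4 / pD - pm * v1)
      + (pb * S0 * v4 / pD + pg * pb * V0 * v4 / pD - (pm + pga) * v2) + (pga * v2 - (pm + pw) * v3) = 0"
      using r0 r1 r2 r3 by simp
    then show ?thesis by (simp add: algebra_simps)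
  qed
  then have sum2: "v0 + v1 = -(v2+v3)" using pos by simp
  have pg1: "pg \<le> 1"
  proof (rule ccontr)
    assume "\<not> pg \<le> 1"
    then have "pg > 1" by simp
    have Y: "Y = -X/pg" using XY pos by (simp add: field_simps)
    have "X/pg < X" using Xpos \<open>pg > 1\<close> by (simp add: divide_less_eq)
    then have "X + Y > 0" using Y by simp
    moreover have "v0 + v1 = X + Y + (S0+V0)* v4/pD" by (simp add: X_def Y_def add_divide_distrib algebra_simps)
    moreover have "(S0+V0)* v4/pD > 0" using S0 V0 v4 pos by simp
    ultimately have "v0 + v1 > 0" by simp
    then show False using sum2 v2 v3 by simp
  qed
  define t where "t = q4/v4"
  have q4t: "q4 = t* v4" using v4 by (simp add: t_def)
  have q2t: "q2 = t* v2"
  proof -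
    have "q2 = pdl*q4/pet" using s4 pos by (simp add: field_simps)
    moreover have "v2 = pdl* v4/pet" using r4 pos by (simp add: field_simps)
    ultimately show ?thesis using q4t by simp
  qed
  have q3t: "q3 = t* v3"
  proof -
    have "pm + pw > 0" using pos by simp
    then have "q3 = pga*q2/(pm+pw)" "v3 = pga* v2/(pm+pw)" using s3 r3 by (simp_all add: field_simps)
    then show ?thesis using q2t by simp
  qed
  define q0' where "q0' = q0 - t* v0"
  define q1' where "q1' = q1 - t* v1"
  have A: "(pm+pps)*q0' = -pb* v4*X/pD"
  proof -
    have "(pm+pps)*q0' + pb* v4*X/pD
       = -(- pb*((pD*S0*q4 + pD* v0* v4 - S0* v4* v4)/(pD*pD)) - (pm+pps)*q0 + pw*q3)
         + t*(- pb * S0 * v4 / pD - (pm + pps) * v0 + pw * v3)"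
      unfolding q0'_def X_def q4t q3t using pos by (simp add: field_simps)
    then show ?thesis using s0 r0 by simp
  qed
  have B: "pm*q1' = pps*q0' - pg*pb* v4*Y/pD"
  proof -
    have "pm*q1' - pps*q0' + pg*pb* v4*Y/pD
       = -(pps*q0 - pg*pb*((pD*V0*q4 + pD* v1* v4 - V0* v4* v4)/(pD*pD)) - pm*q1)
         + t*(pps * v0 - pg * pb * V0 * v4 / pD - pm * v1)"
      unfolding q0'_def q1'_def Y_def q4t using pos by (simp add: field_simps)
    then show ?thesis using s1 r1 by simp
  qed
  have "pg*Y = -X" using XY by simp
  then have "pg*pb* v4*Y/pD = -pb* v4*X/pD" by (metis mult.commute mult.left_commute mult_minus_left)
  then have "pm*q1' = pps*q0' - (pm+pps)*q0'" using A B by simp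
  then have "pm*q1' = pm*(-q0')" by (simp add: algebra_simps)
  then have q1'e: "q1' = -q0'" using pos(3) by (metis mult_left_cancel order_less_irrefl)
  have Om: "pD*(q0+pg*q1) - (S0+pg*V0)*q4 = pD*q0'*(1-pg)"
  proof -
    have "pD*(q0+pg*q1) - (S0+pg*V0)*q4 = pD*(q0'+pg*q1') + t*(pD*(v0 + pg* v1) - (S0+pg*V0)* v4)"
      unfolding q0'_def q1'_def q4t by (simp add: algebra_simps)
    also have "pD*(v0 + pg* v1) - (S0+pg*V0)* v4 = 0" using aeq by simp
    finally show ?thesis unfolding q1'e by (simp add: algebra_simps)
  qed
  have "-pb* v4*X/pD < 0" using pos v4 Xpos by simp
  then have "(pm+pps)*q0' < 0" using A by simp
  then have q0neg: "q0' < 0" using pos by (simp add: mult_less_0_iff)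
  have "pD*q0' < 0" using pos q0neg by (simp add: mult_pos_neg)
  then have "pD*q0'*(1-pg) \<le> 0" using pg1 by (simp add: mult_nonpos_nonneg)
  then have W: "pD*(q0+pg*q1) - (S0+pg*V0)*q4 \<le> 0" using Om by simp
  have "pet*pb* v4*(pD*(q0+pg*q1) - (S0+pg*V0)*q4) \<le> 0"
    by (rule mult_nonneg_nonpos[OF _ W]) (use pos v4 in simp)
  then have "pet*pb* v4*(pD*(q0+pg*q1) - (S0+pg*V0)*q4)/(pD*pD) \<le> 0"
    by (rule divide_nonpos_pos) (use pos in simp)
  then have "H3/2/3*(pet* v2 + (pm+pga)* v4) \<le> 0" using Z by simp
  moreover have "pet* v2 + (pm+pga)* v4 > 0" using pos v2 v4 by (simp add: add_pos_pos)
  ultimately show ?thesis by (simp add: mult_le_0_iff)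
qed

lemma lim_eq:
  fixes f g :: "real \<Rightarrow> real"
  assumes "(f \<longlongrightarrow> a) (at 0)" "(g \<longlongrightarrow> b) (at 0)" "\<forall>\<^sub>F u in at 0. f u = g u"
  shows "a = b"
proof -
  have "(g \<longlongrightarrow> a) (at 0)" using Lim_transform_eventually[OF assms(1) assms(3)] .
  then show ?thesis using tendsto_unique[OF _ _ assms(2)] by simp
qed

theorem lemma1:
  fixes p0 :: "real^10" and i j :: 10
    and Phi :: "real^3 \<Rightarrow> real^5" and h :: "real^3 \<Rightarrow> real" and U :: "(real^3) set"
    and P :: "real^3 \<Rightarrow> real^10" and a b c d e :: real
  defines "P \<equiv> (\<lambda>y. p0 + (y$1) *\<^sub>R axis i 1 + (y$2) *\<^sub>R axis j 1)"
    and "a \<equiv> pd [0,0] h 0 / 2"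
    and "b \<equiv> pd [1,0] h 0"
    and "c \<equiv> pd [0,0,0] h 0 / 3"
    and "d \<equiv> pd [2,0,0] h 0"
    and "e \<equiv> (- b * d + pd [1,0,0] h 0 * pd [2,0] h 0) / (2 * b * c)"
  assumes bif: "bif_point p0"
    and ij: "i \<noteq> j"
    and indep: "\<forall>t. dfe (p0 + t *\<^sub>R axis i 1) = dfe p0"
    and U: "open U" "0 \<in> U"
    and smooth: "Ckv_on 3 U Phi" "Ck_on 3 U h"
    and invariant: "\<forall>y\<in>U. F (P y) (Phi y) = h y *\<^sub>R pdv [0] Phi y"
    and base: "\<forall>y\<in>U. y$0 = 0 \<longrightarrow> Phi y = dfe (P y) \<and> h y = 0"
    and null: "jac p0 *v pdv [0] Phi 0 = 0" "pdv [0] Phi 0 \<noteq> 0"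
              "pdv [0] Phi 0 $ 2 \<ge> 0" "pdv [0] Phi 0 $ 4 \<ge> 0"
    and hyp: "a = 0" "b > 0" "e \<noteq> 0"
  shows "c \<le> 0"
proof -
  have pos: "\<forall>i. p0 $ i > 0" and R0: "R0 p0 = 1" using bif unfolding bif_point_def by auto
  define pL where "pL = Lam p0"
  define pb where "pb = bet p0"
  define pD where "pD = DD p0"
  define pm where "pm = mu p0"
  define pps where "pps = psi p0"
  define pw where "pw = ww p0"
  define pg where "pg = sig p0"
  define pga where "pga = gam p0"
  define pet where "pet = eta p0"
  define pdl where "pdl = del p0"
  have ppos: "pL > 0" "pb > 0" "pD > 0" "pm > 0" "pps > 0" "pw > 0" "pg > 0" "pga > 0" "pet > 0" "pdl > 0"
    using pos unfolding pL_def pb_def pD_def pm_def pps_def pw_def pg_def pga_def pet_def pdl_def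
      Lam_def bet_def DD_def mu_def psi_def ww_def sig_def gam_def eta_def del_def by auto
  define S0 where "S0 = dfe p0 $ 0"
  define V0 where "V0 = dfe p0 $ 1"
  have S0e: "S0 = pL/(pm+pps)" by (simp add: S0_def dfe_comp pL_def pm_def pps_def)
  have V0e: "V0 = pL*pps/(pm*(pm+pps))" by (simp add: V0_def dfe_comp pL_def pm_def pps_def)
  have S0pos: "S0 > 0" using ppos by (simp add: S0e)
  have V0pos: "V0 > 0" using ppos by (simp add: V0e)
  have LS0: "pL = (pm+pps)*S0" using ppos by (simp add: S0e)
  have psS0: "pps*S0 = pm*V0" using ppos by (simp add: S0e V0e)
  have R0eq: "pet*pb*(S0+pg*V0) = pD*pdl*(pm+pga)"
  proof -
    have "pD*pdl*(pm+pga) > 0" using ppos by simp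
    moreover have "R0 p0 = pet*pb*(S0+pg*V0)/(pD*pdl*(pm+pga))"
      unfolding R0_def S0_def V0_def pet_def pb_def pg_def pD_def pdl_def pm_def pga_def by (rule refl)
    then have one: "pet*pb*(S0+pg*V0)/(pD*pdl*(pm+pga)) = 1" using R0 by metis
    have "pet*pb*(S0+pg*V0) = (pet*pb*(S0+pg*V0)/(pD*pdl*(pm+pga))) * (pD*pdl*(pm+pga))"
      using ppos by (simp add: add_pos_pos)
    then show ?thesis unfolding one by simp
  qed
  have dfe4: "dfe p0 $ 2 = 0" "dfe p0 $ 3 = 0" "dfe p0 $ 4 = 0" by (simp_all add: dfe_comp)
  define e0 :: "real^3" where "e0 = axis 0 1"
  obtain r where r: "r > 0" "ball 0 r \<subseteq> U" using U open_contains_ball by blast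
  have inU: "u *\<^sub>R e0 \<in> U" if "\<bar>u\<bar> < r" for u
    using r(2) that by (auto simp: e0_def dist_norm)
  have Pl: "P (u *\<^sub>R e0) = p0" for u
    by (simp add: P_def e0_def axis_def)
  define Hn where "Hn n u = pd (replicate n 0) h (u *\<^sub>R e0)" for n u
  define Pn where "Pn k n u = pd (replicate n 0) (\<lambda>y. Phi y $ k) (u *\<^sub>R e0)" for k n u
  have CkP: "Ck_on 3 U (\<lambda>y. Phi y $ k)" for k using smooth(1) unfolding Ckv_on_def by blast
  have dH: "(Hn n has_real_derivative Hn (Suc n) u) (at u)" if "\<bar>u\<bar> < r" "n < 3" for n u
    using line_deriv[OF smooth(2), of u "replicate n 0"] inU[OF that(1)] that(2)
    unfolding Hn_def e0_def by simp
  have dP: "(Pn k n has_real_derivative Pn k (Suc n) u) (at u)" if "\<bar>u\<bar> < r" "n < 3" for k n u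
    using line_deriv[OF CkP, of u "replicate n 0"] inU[OF that(1)] that(2)
    unfolding Pn_def e0_def by simp
  have evr: "\<forall>\<^sub>F u in nhds 0. \<bar>u\<bar> < r"
    using r(1) by (auto simp: eventually_nhds_metric dist_real_def intro!: exI[of _ r])
  have evat: "\<forall>\<^sub>F u in at 0. u \<noteq> 0 \<and> \<bar>u\<bar> < r"
    using evr by (auto simp: eventually_at_filter elim: eventually_mono)
  have P0: "P 0 = p0" using Pl[of 0] by simp
  have base0: "Phi 0 = dfe p0" "h 0 = 0" using base U(2) P0 by auto
  have Hn00: "Hn 0 0 = 0" by (simp add: Hn_def base0)
  have Pn00: "Pn k 0 0 = dfe p0 $ k" for k by (simp add: Pn_def base0)
  have PhiP: "Phi (u *\<^sub>R e0) $ k = Pn k 0 u" for k u by (simp add: Pn_def)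
  have inv: "F p0 (Phi (u *\<^sub>R e0)) $ k = Hn 0 u * Pn k 1 u" if "\<bar>u\<bar> < r" for k u
  proof -
    have "F p0 (Phi (u *\<^sub>R e0)) = h (u *\<^sub>R e0) *\<^sub>R pdv [0] Phi (u *\<^sub>R e0)"
      using invariant inU[OF that] Pl by metis
    then show ?thesis by (simp add: Hn_def Pn_def pdv_def)
  qed
  define vv where "vv = pdv [0] Phi 0"
  define nv where "nv k = Pn k 1 0" for k
  have vv: "vv $ k = nv k" for k by (simp add: vv_def nv_def Pn_def pdv_def)
  define h1 where "h1 = Hn 1 0"
  have a_eq: "a = Hn 2 0 / 2" by (simp add: a_def Hn_def numeral_2_eq_2)
  have c_eq: "c = Hn 3 0 / 3" by (simp add: c_def Hn_def numeral_3_eq_3)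
  have dH0: "(Hn n has_real_derivative Hn (Suc n) 0) (at 0)" if "n < 3" for n
    using dH r(1) that by simp
  have dP0: "(Pn k n has_real_derivative Pn k (Suc n) 0) (at 0)" if "n < 3" for k n
    using dP r(1) that by simp
  have evdH: "\<forall>\<^sub>F u in nhds 0. (Hn n has_real_derivative Hn (Suc n) u) (at u)" if "n < 3" for n
    using evr by (rule eventually_mono) (use dH that in blast)
  have evdP: "\<forall>\<^sub>F u in nhds 0. (Pn k n has_real_derivative Pn k (Suc n) u) (at u)" if "n < 3" for k n
    using evr by (rule eventually_mono) (use dP that in blast)
  have Pl0: "(Pn k 0 \<longlongrightarrow> dfe p0 $ k) (at 0)" for k
    using isContD[OF DERIV_isCont[OF dP0[of 0 k]]] Pn00 by simp
  have P1l: "(Pn k 1 \<longlongrightarrow> nv k) (at 0)" for k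
    using isContD[OF DERIV_isCont[OF dP0[of 1 k]]] unfolding nv_def by simp
  define dd where "dd k u = (Pn k 0 u - dfe p0 $ k)/u" for k u
  have ddl: "(dd k \<longlongrightarrow> nv k) (at 0)" for k
  proof -
    have "((\<lambda>u. Pn k 0 u - dfe p0 $ k) has_real_derivative nv k) (at 0)"
      using dP0[of 0 k] unfolding nv_def by (auto intro!: derivative_eq_intros)
    from quot_lim[OF this] show ?thesis using Pn00 unfolding dd_def by simp
  qed
  define qf where "qf k u = (dd k u - nv k)/u" for k u
  define qq where "qq k = Pn k 2 0 / 2" for k
  have qfl: "(qf k \<longlongrightarrow> qq k) (at 0)" for k
  proof -
    have der: "((\<lambda>u. Pn k 1 u - nv k) has_real_derivative Pn k 2 0) (at 0)"
      using dP0[of 1 k] by (auto intro!: derivative_eq_intros simp: numeral_2_eq_2)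
    have A: "((\<lambda>u. (Pn k 1 u - nv k) / u ^ 1) \<longlongrightarrow> Pn k 2 0) (at 0)"
      using quot_lim[OF der] unfolding nv_def by simp
    have B: "\<forall>\<^sub>F u in nhds 0. ((\<lambda>u. Pn k 0 u - dfe p0 $ k - nv k * u) has_real_derivative Pn k 1 u - nv k) (at u)"
      using evdP[of 0 k] by (rule eventually_mono) (auto intro!: derivative_eq_intros)
    have C: "((\<lambda>u. (Pn k 0 u - dfe p0 $ k - nv k * u) / u ^ Suc 1) \<longlongrightarrow> Pn k 2 0 / real (Suc 1)) (at 0)"
      by (rule lim_step[OF _ B A]) (simp add: Pn00)
    have "qf k = (\<lambda>u. (Pn k 0 u - dfe p0 $ k - nv k * u) / u ^ Suc 1)"
    proof
      fix u show "qf k u = (Pn k 0 u - dfe p0 $ k - nv k * u) / u ^ Suc 1"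
        by (cases "u = 0") (simp_all add: qf_def dd_def field_simps power2_eq_square)
    qed
    then show ?thesis using C by (simp add: qq_def)
  qed
  have Hl1: "((\<lambda>u. Hn 0 u / u) \<longlongrightarrow> h1) (at 0)"
    using quot_lim[OF dH0[of 0]] Hn00 unfolding h1_def by simp
  have den_l: "((\<lambda>u. Pn 4 0 u + pD) \<longlongrightarrow> pD) (at 0)"
    using Pl0[of 4] dfe4 by (auto intro!: tendsto_eq_intros)
  have EV: "\<forall>\<^sub>F u in at 0. u \<noteq> 0 \<and> \<bar>u\<bar> < r \<and> u * dd 4 u + pD > 0"
  proof -
    have "\<forall>\<^sub>F u in at 0. 0 < Pn 4 0 u + pD" using order_tendstoD(1)[OF den_l] ppos by simp
    then show ?thesis using evat
      by eventually_elim (auto simp: dd_def dfe4)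
  qed
  have Pexp: "Pn k 0 u = dfe p0 $ k + u * dd k u" if "u \<noteq> 0" for k u
    using that by (simp add: dd_def)
  have dexp: "dd k u = nv k + u * qf k u" if "u \<noteq> 0" for k u
    using that by (simp add: qf_def)
  note folds = pL_def[symmetric] pb_def[symmetric] pD_def[symmetric] pm_def[symmetric]
    pps_def[symmetric] pw_def[symmetric] pg_def[symmetric] pga_def[symmetric] pet_def[symmetric]
    pdl_def[symmetric] S0_def[symmetric] V0_def[symmetric]
  have Fr: "F p0 (Phi (u *\<^sub>R e0)) $ 0 = pL - pb*(S0 + u*dd 0 u)*(u*dd 4 u)/(u*dd 4 u + pD) - (pm+pps)*(S0 + u*dd 0 u) + pw*(u*dd 3 u)"
    "F p0 (Phi (u *\<^sub>R e0)) $ 1 = pps*(S0 + u*dd 0 u) - pg*pb*(V0 + u*dd 1 u)*(u*dd 4 u)/(u*dd 4 u + pD) - pm*(V0 + u*dd 1 u)"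
    "F p0 (Phi (u *\<^sub>R e0)) $ 2 = pb*(S0 + u*dd 0 u)*(u*dd 4 u)/(u*dd 4 u+pD) + pg*pb*(V0 + u*dd 1 u)*(u*dd 4 u)/(u*dd 4 u+pD) - (pm+pga)*(u*dd 2 u)"
    "F p0 (Phi (u *\<^sub>R e0)) $ 3 = pga*(u*dd 2 u) - (pm+pw)*(u*dd 3 u)"
    "F p0 (Phi (u *\<^sub>R e0)) $ 4 = pet*(u*dd 2 u) - pdl*(u*dd 4 u)"
    if "u \<noteq> 0" for u
    using that by (simp_all add: F_comp PhiP Pexp dfe4 folds)
  have jr: "- pb*S0*nv 4/pD - (pm+pps)*nv 0 + pw*nv 3 = 0"
    "pps*nv 0 - pg*pb*V0*nv 4/pD - pm*nv 1 = 0"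
    "pb*S0*nv 4/pD + pg*pb*V0*nv 4/pD - (pm+pga)*nv 2 = 0"
    "pga*nv 2 - (pm+pw)*nv 3 = 0"
    "pet*nv 2 - pdl*nv 4 = 0"
  proof -
    have DD0: "DD p0 \<noteq> 0" using ppos pD_def by simp
    have z: "(jac p0 *v vv) $ k = 0" for k using null(1) vv_def by simp
    show "- pb*S0*nv 4/pD - (pm+pps)*nv 0 + pw*nv 3 = 0"
      using z[of 0] jac_row0[OF DD0, of vv] by (simp add: vv folds)
    show "pps*nv 0 - pg*pb*V0*nv 4/pD - pm*nv 1 = 0"
      using z[of 1] jac_rows(1)[OF DD0, of vv] by (simp add: vv folds)
    show "pb*S0*nv 4/pD + pg*pb*V0*nv 4/pD - (pm+pga)*nv 2 = 0"
      using z[of 2] jac_rows(2)[OF DD0, of vv] by (simp add: vv folds)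
    show "pga*nv 2 - (pm+pw)*nv 3 = 0"
      using z[of 3] jac_rows(3)[OF DD0, of vv] by (simp add: vv folds)
    show "pet*nv 2 - pdl*nv 4 = 0"
      using z[of 4] jac_rows(4)[OF DD0, of vv] by (simp add: vv folds)
  qed
  have LH1: "((\<lambda>u. Hn 0 u / u * Pn k 1 u) \<longlongrightarrow> h1 * nv k) (at 0)" for k
    by (intro tendsto_intros Hl1 P1l)
  have HF1: "Hn 0 u / u * Pn k 1 u = F p0 (Phi (u *\<^sub>R e0)) $ k / u" if "\<bar>u\<bar> < r" for k u
    using inv[OF that, of k] by simp
  have o1: "h1 * nv 0 = 0" "h1 * nv 1 = 0" "h1 * nv 2 = 0" "h1 * nv 3 = 0" "h1 * nv 4 = 0"
  proof -
    have "h1 * nv 0 = - pb*(S0 + 0*nv 0)*nv 4/(0*nv 4+pD) - (pm+pps)*nv 0 + pw*nv 3"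
    proof (rule lim_eq[OF LH1])
      show "((\<lambda>u. - pb*(S0 + u*dd 0 u)*dd 4 u/(u*dd 4 u+pD) - (pm+pps)*dd 0 u + pw*dd 3 u) \<longlongrightarrow>
          - pb*(S0 + 0*nv 0)*nv 4/(0*nv 4+pD) - (pm+pps)*nv 0 + pw*nv 3) (at 0)"
        using ppos by (intro tendsto_intros ddl) auto
      show "\<forall>\<^sub>F u in at 0. Hn 0 u / u * Pn 0 1 u = - pb*(S0 + u*dd 0 u)*dd 4 u/(u*dd 4 u+pD) - (pm+pps)*dd 0 u + pw*dd 3 u"
        using EV proof eventually_elim
          case (elim u)
          then have u: "u \<noteq> 0" "\<bar>u\<bar> < r" "u*dd 4 u + pD \<noteq> 0" by auto
          show ?case unfolding HF1[OF u(2)] Fr(1)[OF u(1)] by (rule idS1) (use u LS0 in auto)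
        qed
    qed
    then show "h1 * nv 0 = 0" using jr(1) by simp
    have "h1 * nv 1 = pps*nv 0 - pg*pb*(V0 + 0*nv 1)*nv 4/(0*nv 4+pD) - pm*nv 1"
    proof (rule lim_eq[OF LH1])
      show "((\<lambda>u. pps*dd 0 u - pg*pb*(V0 + u*dd 1 u)*dd 4 u/(u*dd 4 u+pD) - pm*dd 1 u) \<longlongrightarrow>
          pps*nv 0 - pg*pb*(V0 + 0*nv 1)*nv 4/(0*nv 4+pD) - pm*nv 1) (at 0)"
        using ppos by (intro tendsto_intros ddl) auto
      show "\<forall>\<^sub>F u in at 0. Hn 0 u / u * Pn 1 1 u = pps*dd 0 u - pg*pb*(V0 + u*dd 1 u)*dd 4 u/(u*dd 4 u+pD) - pm*dd 1 u"
        using EV proof eventually_elim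
          case (elim u)
          then have u: "u \<noteq> 0" "\<bar>u\<bar> < r" "u*dd 4 u + pD \<noteq> 0" by auto
          show ?case unfolding HF1[OF u(2)] Fr(2)[OF u(1)] by (rule idV1) (use u psS0 in auto)
        qed
    qed
    then show "h1 * nv 1 = 0" using jr(2) by simp
    have "h1 * nv 2 = pb*(S0 + 0*nv 0)*nv 4/(0*nv 4+pD) + pg*pb*(V0 + 0*nv 1)*nv 4/(0*nv 4+pD) - (pm+pga)*nv 2"
    proof (rule lim_eq[OF LH1])
      show "((\<lambda>u. pb*(S0 + u*dd 0 u)*dd 4 u/(u*dd 4 u+pD) + pg*pb*(V0 + u*dd 1 u)*dd 4 u/(u*dd 4 u+pD) - (pm+pga)*dd 2 u) \<longlongrightarrow>
          pb*(S0 + 0*nv 0)*nv 4/(0*nv 4+pD) + pg*pb*(V0 + 0*nv 1)*nv 4/(0*nv 4+pD) - (pm+pga)*nv 2) (at 0)"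
        using ppos by (intro tendsto_intros ddl) auto
      show "\<forall>\<^sub>F u in at 0. Hn 0 u / u * Pn 2 1 u = pb*(S0 + u*dd 0 u)*dd 4 u/(u*dd 4 u+pD) + pg*pb*(V0 + u*dd 1 u)*dd 4 u/(u*dd 4 u+pD) - (pm+pga)*dd 2 u"
        using EV proof eventually_elim
          case (elim u)
          then have u: "u \<noteq> 0" "\<bar>u\<bar> < r" "u*dd 4 u + pD \<noteq> 0" by auto
          show ?case unfolding HF1[OF u(2)] Fr(3)[OF u(1)] by (rule idI1) (use u in auto)
        qed
    qed
    then show "h1 * nv 2 = 0" using jr(3) by simp
    have "h1 * nv 3 = pga*nv 2 - (pm+pw)*nv 3"
    proof (rule lim_eq[OF LH1])
      show "((\<lambda>u. pga*dd 2 u - (pm+pw)*dd 3 u) \<longlongrightarrow> pga*nv 2 - (pm+pw)*nv 3) (at 0)"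
        by (intro tendsto_intros ddl)
      show "\<forall>\<^sub>F u in at 0. Hn 0 u / u * Pn 3 1 u = pga*dd 2 u - (pm+pw)*dd 3 u"
        using EV proof eventually_elim
          case (elim u)
          then have u: "u \<noteq> 0" "\<bar>u\<bar> < r" "u*dd 4 u + pD \<noteq> 0" by auto
          show ?case unfolding HF1[OF u(2)] Fr(4)[OF u(1)] by (rule idL1) (use u in auto)
        qed
    qed
    then show "h1 * nv 3 = 0" using jr(4) by simp
    have "h1 * nv 4 = pet*nv 2 - pdl*nv 4"
    proof (rule lim_eq[OF LH1])
      show "((\<lambda>u. pet*dd 2 u - pdl*dd 4 u) \<longlongrightarrow> pet*nv 2 - pdl*nv 4) (at 0)"
        by (intro tendsto_intros ddl)
      show "\<forall>\<^sub>F u in at 0. Hn 0 u / u * Pn 4 1 u = pet*dd 2 u - pdl*dd 4 u"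
        using EV proof eventually_elim
          case (elim u)
          then have u: "u \<noteq> 0" "\<bar>u\<bar> < r" "u*dd 4 u + pD \<noteq> 0" by auto
          show ?case unfolding HF1[OF u(2)] Fr(5)[OF u(1)] by (rule idL1) (use u in auto)
        qed
    qed
    then show "h1 * nv 4 = 0" using jr(5) by simp
  qed
  have vnz: "nv 0 \<noteq> 0 \<or> nv 1 \<noteq> 0 \<or> nv 2 \<noteq> 0 \<or> nv 3 \<noteq> 0 \<or> nv 4 \<noteq> 0"
  proof -
    obtain k where "vv $ k \<noteq> 0" using null(2) unfolding vv_def[symmetric] by (auto simp: vec_eq_iff)
    then show ?thesis using exhaust_5[of k] vv by auto
  qed
  have h10: "h1 = 0" using o1 vnz by auto
  have Dnz: "pD \<noteq> 0" using ppos by simp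
  have n3: "(0::nat) < 3" "(1::nat) < 3" "(2::nat) < 3" by auto
  have H2l: "((\<lambda>u. Hn 0 u / u ^ 2) \<longlongrightarrow> 0) (at 0)"
  proof -
    have A: "((\<lambda>u. Hn (Suc 0) u / u ^ 1) \<longlongrightarrow> Hn 2 0) (at 0)"
      using quot_lim[OF dH0[of 1]] h10 unfolding h1_def by (simp add: numeral_2_eq_2)
    have "((\<lambda>u. Hn 0 u / u ^ Suc 1) \<longlongrightarrow> Hn 2 0 / real (Suc 1)) (at 0)"
      by (rule lim_step[OF Hn00 evdH[OF n3(1)] A])
    moreover have "Hn 2 0 = 0" using hyp(1) a_eq by simp
    ultimately show ?thesis by (simp add: numeral_2_eq_2)
  qed
  have LH2: "((\<lambda>u. Hn 0 u / u ^ 2 * Pn k 1 u) \<longlongrightarrow> 0 * nv k) (at 0)" for k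
    by (intro tendsto_intros H2l P1l)
  have HF2: "Hn 0 u / u ^ 2 * Pn k 1 u = F p0 (Phi (u *\<^sub>R e0)) $ k / u / u" if "\<bar>u\<bar> < r" for k u
    using inv[OF that, of k] by (simp add: power2_eq_square)
  have o2: "- pb*((pD*S0*qq 4 + pD*nv 0*nv 4 - S0*nv 4*nv 4)/(pD*pD)) - (pm+pps)*qq 0 + pw*qq 3 = 0"
    "pps*qq 0 - pg*pb*((pD*V0*qq 4 + pD*nv 1*nv 4 - V0*nv 4*nv 4)/(pD*pD)) - pm*qq 1 = 0"
    "pb*((pD*S0*qq 4 + pD*nv 0*nv 4 - S0*nv 4*nv 4)/(pD*pD)) + pg*pb*((pD*V0*qq 4 + pD*nv 1*nv 4 - V0*nv 4*nv 4)/(pD*pD)) - (pm+pga)*qq 2 = 0"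
    "pga*qq 2 - (pm+pw)*qq 3 = 0"
    "pet*qq 2 - pdl*qq 4 = 0"
  proof -
    have "0 * nv 0 = - pb*((pD*S0*qq 4 + pD*nv 0*nv 4 - S0*nv 4*nv 4)/(pD*(0*nv 4+pD))) - (pm+pps)*qq 0 + pw*qq 3"
    proof (rule lim_eq[OF LH2])
      show "((\<lambda>u. - pb*((pD*S0*qf 4 u + pD*dd 0 u*dd 4 u - S0*nv 4*dd 4 u)/(pD*(u*dd 4 u+pD))) - (pm+pps)*qf 0 u + pw*qf 3 u) \<longlongrightarrow>
          - pb*((pD*S0*qq 4 + pD*nv 0*nv 4 - S0*nv 4*nv 4)/(pD*(0*nv 4+pD))) - (pm+pps)*qq 0 + pw*qq 3) (at 0)"
        using ppos by (intro tendsto_intros ddl qfl) auto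
      show "\<forall>\<^sub>F u in at 0. Hn 0 u / u ^ 2 * Pn 0 1 u = - pb*((pD*S0*qf 4 u + pD*dd 0 u*dd 4 u - S0*nv 4*dd 4 u)/(pD*(u*dd 4 u+pD))) - (pm+pps)*qf 0 u + pw*qf 3 u"
        using EV proof eventually_elim
          case (elim u)
          then have u: "u \<noteq> 0" "\<bar>u\<bar> < r" "u*dd 4 u + pD \<noteq> 0" by auto
          show ?case unfolding HF2[OF u(2)] Fr(1)[OF u(1)] idS1[OF u(1) u(3) LS0]
            by (rule idS2[OF u(1) Dnz u(3) dexp[OF u(1), of 4] dexp[OF u(1), of 0] dexp[OF u(1), of 3] jr(1)])
        qed
    qed
    then show "- pb*((pD*S0*qq 4 + pD*nv 0*nv 4 - S0*nv 4*nv 4)/(pD*pD)) - (pm+pps)*qq 0 + pw*qq 3 = 0" by simp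
    have "0 * nv 1 = pps*qq 0 - pg*pb*((pD*V0*qq 4 + pD*nv 1*nv 4 - V0*nv 4*nv 4)/(pD*(0*nv 4+pD))) - pm*qq 1"
    proof (rule lim_eq[OF LH2])
      show "((\<lambda>u. pps*qf 0 u - pg*pb*((pD*V0*qf 4 u + pD*dd 1 u*dd 4 u - V0*nv 4*dd 4 u)/(pD*(u*dd 4 u+pD))) - pm*qf 1 u) \<longlongrightarrow>
          pps*qq 0 - pg*pb*((pD*V0*qq 4 + pD*nv 1*nv 4 - V0*nv 4*nv 4)/(pD*(0*nv 4+pD))) - pm*qq 1) (at 0)"
        using ppos by (intro tendsto_intros ddl qfl) auto
      show "\<forall>\<^sub>F u in at 0. Hn 0 u / u ^ 2 * Pn 1 1 u = pps*qf 0 u - pg*pb*((pD*V0*qf 4 u + pD*dd 1 u*dd 4 u - V0*nv 4*dd 4 u)/(pD*(u*dd 4 u+pD))) - pm*qf 1 u"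
        using EV proof eventually_elim
          case (elim u)
          then have u: "u \<noteq> 0" "\<bar>u\<bar> < r" "u*dd 4 u + pD \<noteq> 0" by auto
          show ?case unfolding HF2[OF u(2)] Fr(2)[OF u(1)] idV1[OF u(1) u(3) psS0]
            by (rule idV2[OF u(1) Dnz u(3) dexp[OF u(1), of 4] dexp[OF u(1), of 0] dexp[OF u(1), of 1] jr(2)])
        qed
    qed
    then show "pps*qq 0 - pg*pb*((pD*V0*qq 4 + pD*nv 1*nv 4 - V0*nv 4*nv 4)/(pD*pD)) - pm*qq 1 = 0" by simp
    have "0 * nv 2 = pb*((pD*S0*qq 4 + pD*nv 0*nv 4 - S0*nv 4*nv 4)/(pD*(0*nv 4+pD))) + pg*pb*((pD*V0*qq 4 + pD*nv 1*nv 4 - V0*nv 4*nv 4)/(pD*(0*nv 4+pD))) - (pm+pga)*qq 2"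
    proof (rule lim_eq[OF LH2])
      show "((\<lambda>u. pb*((pD*S0*qf 4 u + pD*dd 0 u*dd 4 u - S0*nv 4*dd 4 u)/(pD*(u*dd 4 u+pD))) + pg*pb*((pD*V0*qf 4 u + pD*dd 1 u*dd 4 u - V0*nv 4*dd 4 u)/(pD*(u*dd 4 u+pD))) - (pm+pga)*qf 2 u) \<longlongrightarrow>
          pb*((pD*S0*qq 4 + pD*nv 0*nv 4 - S0*nv 4*nv 4)/(pD*(0*nv 4+pD))) + pg*pb*((pD*V0*qq 4 + pD*nv 1*nv 4 - V0*nv 4*nv 4)/(pD*(0*nv 4+pD))) - (pm+pga)*qq 2) (at 0)"
        using ppos by (intro tendsto_intros ddl qfl) auto
      show "\<forall>\<^sub>F u in at 0. Hn 0 u / u ^ 2 * Pn 2 1 u = pb*((pD*S0*qf 4 u + pD*dd 0 u*dd 4 u - S0*nv 4*dd 4 u)/(pD*(u*dd 4 u+pD))) + pg*pb*((pD*V0*qf 4 u + pD*dd 1 u*dd 4 u - V0*nv 4*dd 4 u)/(pD*(u*dd 4 u+pD))) - (pm+pga)*qf 2 u"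
        using EV proof eventually_elim
          case (elim u)
          then have u: "u \<noteq> 0" "\<bar>u\<bar> < r" "u*dd 4 u + pD \<noteq> 0" by auto
          show ?case unfolding HF2[OF u(2)] Fr(3)[OF u(1)] idI1[OF u(1) u(3)]
            by (rule idI2[OF u(1) Dnz u(3) dexp[OF u(1), of 4] dexp[OF u(1), of 2] jr(3)])
        qed
    qed
    then show "pb*((pD*S0*qq 4 + pD*nv 0*nv 4 - S0*nv 4*nv 4)/(pD*pD)) + pg*pb*((pD*V0*qq 4 + pD*nv 1*nv 4 - V0*nv 4*nv 4)/(pD*pD)) - (pm+pga)*qq 2 = 0" by simp
    have "0 * nv 3 = pga*qq 2 - (pm+pw)*qq 3"
    proof (rule lim_eq[OF LH2])
      show "((\<lambda>u. pga*qf 2 u - (pm+pw)*qf 3 u) \<longlongrightarrow> pga*qq 2 - (pm+pw)*qq 3) (at 0)"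
        by (intro tendsto_intros qfl)
      show "\<forall>\<^sub>F u in at 0. Hn 0 u / u ^ 2 * Pn 3 1 u = pga*qf 2 u - (pm+pw)*qf 3 u"
        using EV proof eventually_elim
          case (elim u)
          then have u: "u \<noteq> 0" "\<bar>u\<bar> < r" "u*dd 4 u + pD \<noteq> 0" by auto
          show ?case unfolding HF2[OF u(2)] Fr(4)[OF u(1)] idL1[OF u(1)]
            by (rule idL2[OF u(1) dexp[OF u(1), of 2] dexp[OF u(1), of 3] jr(4)])
        qed
    qed
    then show "pga*qq 2 - (pm+pw)*qq 3 = 0" by simp
    have "0 * nv 4 = pet*qq 2 - pdl*qq 4"
    proof (rule lim_eq[OF LH2])
      show "((\<lambda>u. pet*qf 2 u - pdl*qf 4 u) \<longlongrightarrow> pet*qq 2 - pdl*qq 4) (at 0)"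
        by (intro tendsto_intros qfl)
      show "\<forall>\<^sub>F u in at 0. Hn 0 u / u ^ 2 * Pn 4 1 u = pet*qf 2 u - pdl*qf 4 u"
        using EV proof eventually_elim
          case (elim u)
          then have u: "u \<noteq> 0" "\<bar>u\<bar> < r" "u*dd 4 u + pD \<noteq> 0" by auto
          show ?case unfolding HF2[OF u(2)] Fr(5)[OF u(1)] idL1[OF u(1)]
            by (rule idL2[OF u(1) dexp[OF u(1), of 2] dexp[OF u(1), of 4] jr(5)])
        qed
    qed
    then show "pet*qq 2 - pdl*qq 4 = 0" by simp
  qed
  have vpos: "nv 4 > 0" "nv 2 > 0" "nv 3 > 0"
    using alg1[OF ppos(2-10) jr(1,2,4,5) vnz null(4)[folded vv_def, unfolded vv]] by auto
  have aeq: "pD*(nv 0 + pg*nv 1) = (S0+pg*V0)*nv 4"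
    by (rule alg_a[OF ppos(2) ppos(3) ppos(9) vpos(1) R0eq o2(3) o2(5)])
  have H3l: "((\<lambda>u. Hn 0 u / u ^ 3) \<longlongrightarrow> Hn 3 0 / 2 / 3) (at 0)"
  proof -
    have H20: "Hn 2 0 = 0" using hyp(1) a_eq by simp
    have A2: "((\<lambda>u. Hn (Suc 1) u / u ^ 1) \<longlongrightarrow> Hn 3 0) (at 0)"
      using quot_lim[OF dH0[of 2]] H20 by (simp add: numeral_2_eq_2 numeral_3_eq_3)
    have H10: "Hn 1 0 = 0" using h10 h1_def by simp
    have B: "((\<lambda>u. Hn 1 u / u ^ Suc 1) \<longlongrightarrow> Hn 3 0 / real (Suc 1)) (at 0)"
      by (rule lim_step[OF H10 evdH[OF n3(2)] A2])
    have B': "((\<lambda>u. Hn 1 u / u ^ 2) \<longlongrightarrow> Hn 3 0 / 2) (at 0)"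
      using B by (simp add: numeral_2_eq_2)
    have evdH0: "\<forall>\<^sub>F u in nhds 0. (Hn 0 has_real_derivative Hn 1 u) (at u)"
      using evdH[OF n3(1)] by simp
    have "((\<lambda>u. Hn 0 u / u ^ Suc 2) \<longlongrightarrow> Hn 3 0 / 2 / real (Suc 2)) (at 0)"
      by (rule lim_step[OF Hn00 evdH0 B'])
    then show ?thesis by (simp add: numeral_3_eq_3)
  qed
  have LH3: "((\<lambda>u. Hn 0 u / u ^ 3 * (pet * Pn 2 1 u + (pm+pga) * Pn 4 1 u)) \<longlongrightarrow>
      Hn 3 0 / 2 / 3 * (pet * nv 2 + (pm+pga) * nv 4)) (at 0)"
    by (intro tendsto_intros H3l P1l)
  have HF3: "Hn 0 u / u ^ 3 * (pet * Pn 2 1 u + (pm+pga) * Pn 4 1 u)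
      = (pet * F p0 (Phi (u *\<^sub>R e0)) $ 2 + (pm+pga) * F p0 (Phi (u *\<^sub>R e0)) $ 4) / u ^ 3"
    if "\<bar>u\<bar> < r" for u
    using inv[OF that, of 2] inv[OF that, of 4] by (simp add: algebra_simps add_divide_distrib)
  have Zl: "Hn 3 0 / 2 / 3 * (pet * nv 2 + (pm+pga) * nv 4)
      = pet*pb*nv 4*(pD*(qq 0+pg*qq 1) - (S0+pg*V0)*qq 4)/(pD*(0*nv 4+pD))"
  proof (rule lim_eq[OF LH3])
    show "((\<lambda>u. pet*pb*dd 4 u*(pD*(qf 0 u+pg*qf 1 u) - (S0+pg*V0)*qf 4 u)/(pD*(u*dd 4 u+pD))) \<longlongrightarrow>
        pet*pb*nv 4*(pD*(qq 0+pg*qq 1) - (S0+pg*V0)*qq 4)/(pD*(0*nv 4+pD))) (at 0)"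
      using ppos by (intro tendsto_intros ddl qfl) auto
    show "\<forall>\<^sub>F u in at 0. Hn 0 u / u ^ 3 * (pet * Pn 2 1 u + (pm+pga) * Pn 4 1 u)
        = pet*pb*dd 4 u*(pD*(qf 0 u+pg*qf 1 u) - (S0+pg*V0)*qf 4 u)/(pD*(u*dd 4 u+pD))"
      using EV proof eventually_elim
        case (elim u)
        then have u: "u \<noteq> 0" "\<bar>u\<bar> < r" "u*dd 4 u + pD \<noteq> 0" by auto
        show ?case unfolding HF3[OF u(2)] Fr(3)[OF u(1)] Fr(5)[OF u(1)]
          by (rule idZ[OF u(1) Dnz u(3) dexp[OF u(1), of 4] dexp[OF u(1), of 0] dexp[OF u(1), of 1] R0eq aeq])
      qed
  qed
  have "Hn 3 0 \<le> 0"
  proof (rule alg2[OF ppos(2-10) S0pos V0pos psS0 jr vpos aeq o2(1) o2(2) o2(4) o2(5)])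
    show "Hn 3 0 / 2 / 3 * (pet * nv 2 + (pm+pga) * nv 4) = pet*pb*nv 4*(pD*(qq 0+pg*qq 1) - (S0+pg*V0)*qq 4)/(pD*pD)"
      using Zl by simp
  qed
  then show ?thesis using c_eq by simp
qed

end
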